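(* For every integer $n \ge 0$, define $\xi : \mathrm{SYT}(\theta^{(n)}) \to \mathcal{P}_n$ as follows. For $T \in \mathrm{SYT}(\theta^{(n)})$, let $H$ be the entry of $T$ in the heart, and let $\xi(T) = p_1 p_2 \cdots p_{2n+2}$, where for each $1 \le i \le 2n+2$: \[ p_i = \begin{cases} \mathsf{E}, & \text{if } i+1 \in \mathrm{arm}(T) \text{ and } i+2 < H;\\ \mathsf{N}, & \text{if } i+1 \in \mathrm{leg}(T) \text{ and } i+2 < H;\\ \mathsf{S}, & \text{if } i+1 \in \mathrm{arm}(T) \text{ and } i+2 = H;\\ \mathsf{W}, & \text{if } i+1 \in \mathrm{leg}(T) \text{ and } i+2 = H;\\ \mathsf{E}, & \text{if } i+2 \in \mathrm{arm}(T) \text{ and } H < i+2;\\ \mathsf{N}, & \text{if } i+2 \in \mathrm{leg}(T) \text{ and } H < i+2. \end{cases} \] Then $\xi(T)$ lies in $\mathcal{P}_n$ for every $T$, and $\xi$ is a bijection.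
   Context: For $n \ge 0$, $\theta^{(n)}$ denotes the integer partition $(n+2, 2, 1^n)$ of $2n+4$ (rows of lengths $n+2$, $2$, and then $n$ rows of length $1$), identified with its Young diagram in English convention (the row of length $n+2$ on top). The \emph{arm} of $\theta^{(n)}$ is its first row (all $n+2$ boxes, including the top-left corner box), the \emph{leg} is its first column (all $n+2$ boxes, including the top-left corner box), and the \emph{heart} is the unique box lying in neither the first row nor the first column (the second box of the second row). $\mathrm{SYT}(\theta^{(n)})$ is the set of standard Young tableaux of shape $\theta^{(n)}$: bijective fillings of the boxes with $1, \dots, 2n+4$ increasing left to right along rows and top to bottom down columns. For a tableau $T$, $\mathrm{arm}(T)$, $\mathrm{leg}(T)$, $\mathrm{heart}(T)$ denote the sets of entries of $T$ in the arm, leg, and heart respectively; "$k \in \mathrm{arm}(T)$" means the entry $k$ lies in the arm. $\mathcal{P}_n$ is the set of lattice paths in $\mathbb{Z}^2$ from $(0,0)$ to $(n,n)$ of exactly $2n+2$ steps, each step one of $\mathsf{N} = (0,1)$, $\mathsf{S} = (0,-1)$, $\mathsf{E} = (1,0)$, $\mathsf{W} = (-1,0)$, such that every vertex of the path lies in the closed first quadrant $\{(x,y) : x \ge 0, y \ge 0\}$. Such a path is identified with its word $p_1 p_2 \cdots p_{2n+2}$ of steps in the alphabet $\{\mathsf{N},\mathsf{S},\mathsf{E},\mathsf{W}\}$. *)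

theory Defs
  imports Main
begin

text \<open>Cells are (row, column), 0-indexed, English convention (row 0 on top).\<close>

definition theta_shape :: "nat \<Rightarrow> (nat \<times> nat) set" where
  "theta_shape n = {(0, c) | c. c < n + 2} \<union> {(1, c) | c. c < 2} \<union> {(r, 0) | r. 2 \<le> r \<and> r < n + 2}"

definition arm_cells :: "nat \<Rightarrow> (nat \<times> nat) set" where
  "arm_cells n = {(0, c) | c. c < n + 2}"

definition leg_cells :: "nat \<Rightarrow> (nat \<times> nat) set" where
  "leg_cells n = {(r, 0) | r. r < n + 2}"

definition heart_cell :: "nat \<times> nat" where
  "heart_cell = (1, 1)"

definition SYT :: "nat \<Rightarrow> ((nat \<times> nat) \<Rightarrow> nat) set" where
  "SYT n = {T. bij_betw T (theta_shape n) {1..2*n+4}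
              \<and> (\<forall>x. x \<notin> theta_shape n \<longrightarrow> T x = 0)
              \<and> (\<forall>r c. (r, c) \<in> theta_shape n \<and> (r, Suc c) \<in> theta_shape n \<longrightarrow> T (r, c) < T (r, Suc c))
              \<and> (\<forall>r c. (r, c) \<in> theta_shape n \<and> (Suc r, c) \<in> theta_shape n \<longrightarrow> T (r, c) < T (Suc r, c))}"

definition in_arm :: "nat \<Rightarrow> ((nat \<times> nat) \<Rightarrow> nat) \<Rightarrow> nat \<Rightarrow> bool" where
  "in_arm n T k \<longleftrightarrow> k \<in> T ` arm_cells n"

definition in_leg :: "nat \<Rightarrow> ((nat \<times> nat) \<Rightarrow> nat) \<Rightarrow> nat \<Rightarrow> bool" where
  "in_leg n T k \<longleftrightarrow> k \<in> T ` leg_cells n"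

datatype step = N | S | E | W

fun step_vec :: "step \<Rightarrow> int \<times> int" where
  "step_vec N = (0, 1)"
| "step_vec S = (0, -1)"
| "step_vec E = (1, 0)"
| "step_vec W = (-1, 0)"

definition endpoint :: "step list \<Rightarrow> int \<times> int" where
  "endpoint ps = (sum_list (map (fst \<circ> step_vec) ps), sum_list (map (snd \<circ> step_vec) ps))"

definition paths :: "nat \<Rightarrow> step list set" where
  "paths n = {ps. length ps = 2*n+2
                \<and> (\<forall>k \<le> length ps. fst (endpoint (take k ps)) \<ge> 0 \<and> snd (endpoint (take k ps)) \<ge> 0)
                \<and> endpoint ps = (int n, int n)}"

text \<open>The i-th letter (1-indexed) of xi(T); H is the heart entry. The final default
  branch is never reached for standard Young tableaux.\<close>
definition xi_letter :: "nat \<Rightarrow> ((nat \<times> nat) \<Rightarrow> nat) \<Rightarrow> nat \<Rightarrow> step" where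
  "xi_letter n T i = (let H = T heart_cell in
     if in_arm n T (i+1) \<and> i+2 < H then E
     else if in_leg n T (i+1) \<and> i+2 < H then N
     else if in_arm n T (i+1) \<and> i+2 = H then S
     else if in_leg n T (i+1) \<and> i+2 = H then W
     else if in_arm n T (i+2) \<and> H < i+2 then E
     else if in_leg n T (i+2) \<and> H < i+2 then N
     else undefined)"

definition xi :: "nat \<Rightarrow> ((nat \<times> nat) \<Rightarrow> nat) \<Rightarrow> step list" where
  "xi n T = map (xi_letter n T) [1..<2*n+3]"

end

theory Submission imports Defs begin

lemma shape_eq: "theta_shape n = arm_cells n \<union> leg_cells n \<union> {heart_cell}"
  by (auto simp: theta_shape_def arm_cells_def leg_cells_def heart_cell_def)

lemma arm_img: "arm_cells n = (\<lambda>c. (0,c)) ` {..<n+2}"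
  by (auto simp: arm_cells_def)
lemma leg_img: "leg_cells n = (\<lambda>r. (r,0)) ` {..<n+2}"
  by (auto simp: leg_cells_def)

lemma SYT_facts:
  assumes "T \<in> SYT n"
  shows "T (0,0) = 1"
    "T`arm_cells n \<union> T`leg_cells n \<union> {T heart_cell} = {1..2*n+4}"
    "card (T`arm_cells n) = n+2" "card (T`leg_cells n) = n+2"
    "T heart_cell \<notin> T`arm_cells n" "T heart_cell \<notin> T`leg_cells n"
    "T`arm_cells n \<inter> T`leg_cells n = {1}"
    "2 \<le> T(0,1)" "T(0,1) < T heart_cell" "2 \<le> T(1,0)" "T(1,0) < T heart_cell"
    "T(1,0) \<in> T`leg_cells n" "T(0,1) \<in> T`arm_cells n"
proof -
  have bij: "bij_betw T (theta_shape n) {1..2*n+4}"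
   and row: "\<And>r c. (r, c) \<in> theta_shape n \<Longrightarrow> (r, Suc c) \<in> theta_shape n \<Longrightarrow> T (r, c) < T (r, Suc c)"
   and col: "\<And>r c. (r, c) \<in> theta_shape n \<Longrightarrow> (Suc r, c) \<in> theta_shape n \<Longrightarrow> T (r, c) < T (Suc r, c)"
    using assms by (auto simp: SYT_def)
  have inj: "inj_on T (theta_shape n)" and img: "T ` theta_shape n = {1..2*n+4}"
    using bij by (auto simp: bij_betw_def)
  have ge1: "p \<in> theta_shape n \<Longrightarrow> 1 \<le> T p" for p using img by auto
  have sh: "(0,c) \<in> theta_shape n \<longleftrightarrow> c < n+2" "(r,0) \<in> theta_shape n \<longleftrightarrow> r < n+2"
     "(1,1) \<in> theta_shape n" for r c
    by (auto simp: theta_shape_def)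
  have t01: "T (0,0) < T(0,1)" using row[of 0 0] sh by auto
  have t10: "T (0,0) < T(1,0)" using col[of 0 0] sh by auto
  have h01: "T (0,1) < T(1,1)" using col[of 0 1] sh by auto
  have h10: "T (1,0) < T(1,1)" using row[of 1 0] sh by auto
  have notone: "p \<in> theta_shape n \<Longrightarrow> p \<noteq> (0,0) \<Longrightarrow> 2 \<le> T p" for p
  proof -
    assume p: "p \<in> theta_shape n" "p \<noteq> (0,0)"
    obtain r c where rc: "p = (r,c)" by (cases p)
    have "\<exists>q \<in> theta_shape n. T q < T p"
    proof (cases "r = 0")
      case True
      then obtain c' where "c = Suc c'" using p rc by (cases c) auto
      then show ?thesis using row[of 0 c'] p rc True sh by (intro bexI[of _ "(0,c')"]) auto
    next
      case False
      show ?thesis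
      proof (cases "c = 0")
        case True
        then obtain r' where "r = Suc r'" using False by (cases r) auto
        then show ?thesis using col[of r' 0] p rc True sh by (intro bexI[of _ "(r',0)"]) auto
      next
        case False2: False
        then have "p = (1,1)" using p rc False by (auto simp: theta_shape_def)
        then show ?thesis using h01 sh by (intro bexI[of _ "(0,1)"]) auto
      qed
    qed
    then show ?thesis using ge1 by fastforce
  qed
  have "1 \<in> T ` theta_shape n" using img by auto
  then obtain p where p: "p \<in> theta_shape n" "T p = 1" by auto
  then have "p = (0,0)" using notone by fastforce
  then show t00: "T (0,0) = 1" using p by simp
  show "T`arm_cells n \<union> T`leg_cells n \<union> {T heart_cell} = {1..2*n+4}"
    using img shape_eq[of n] by auto
  have injA: "inj_on T (arm_cells n)" and injL: "inj_on T (leg_cells n)"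
    using inj shape_eq[of n] by (auto intro: inj_on_subset)
  have "card (arm_cells n) = n+2" unfolding arm_img by (subst card_image) (auto simp: inj_on_def)
  then show "card (T`arm_cells n) = n+2" using injA by (simp add: card_image)
  have "card (leg_cells n) = n+2" unfolding leg_img by (subst card_image) (auto simp: inj_on_def)
  then show "card (T`leg_cells n) = n+2" using injL by (simp add: card_image)
  have hs: "heart_cell \<in> theta_shape n"
  proof -
    have "(1::nat, 1::nat) \<in> {(1, c) |c. c < (2::nat)}" by auto
    then show ?thesis unfolding heart_cell_def theta_shape_def by blast
  qed
  show "T heart_cell \<notin> T`arm_cells n"
  proof
    assume "T heart_cell \<in> T`arm_cells n"
    then obtain q where "q \<in> arm_cells n" "T q = T heart_cell" by auto
    moreover have "q \<in> theta_shape n" using \<open>q \<in> arm_cells n\<close> shape_eq[of n] by blast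
    ultimately have "q = heart_cell" using inj hs by (meson inj_on_def)
    then show False using \<open>q \<in> arm_cells n\<close> by (simp add: heart_cell_def arm_cells_def)
  qed
  show "T heart_cell \<notin> T`leg_cells n"
  proof
    assume "T heart_cell \<in> T`leg_cells n"
    then obtain q where "q \<in> leg_cells n" "T q = T heart_cell" by auto
    moreover have "q \<in> theta_shape n" using \<open>q \<in> leg_cells n\<close> shape_eq[of n] by blast
    ultimately have "q = heart_cell" using inj hs by (meson inj_on_def)
    then show False using \<open>q \<in> leg_cells n\<close> by (simp add: heart_cell_def leg_cells_def)
  qed
  show "T`arm_cells n \<inter> T`leg_cells n = {1}"
  proof
    show "{1} \<subseteq> T`arm_cells n \<inter> T`leg_cells n" using t00
      by (auto simp: arm_cells_def leg_cells_def image_iff intro!: exI[of _ 0])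
    show "T`arm_cells n \<inter> T`leg_cells n \<subseteq> {1}"
    proof
      fix x assume "x \<in> T`arm_cells n \<inter> T`leg_cells n"
      then obtain c r where "c < n+2" "r < n+2" "x = T(0,c)" "x = T(r,0)"
        by (auto simp: arm_cells_def leg_cells_def)
      then have "(0,c) = (r,0)" using inj sh unfolding inj_on_def by metis
      then show "x \<in> {1}" using t00 \<open>x = T(0,c)\<close> by simp
    qed
  qed
  show "2 \<le> T(0,1)" "T(0,1) < T heart_cell" "2 \<le> T(1,0)" "T(1,0) < T heart_cell"
    using t00 t01 t10 h01 h10 by (auto simp: heart_cell_def)
  show "T(1,0) \<in> T`leg_cells n" "T(0,1) \<in> T`arm_cells n"
    by (auto simp: arm_cells_def leg_cells_def)
qed


definition ent :: "nat \<Rightarrow> nat \<Rightarrow> nat" where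
  "ent H i = (if i+3 \<le> H then i+2 else i+3)"

lemma ent_inj: "inj (ent H)"
  by (auto simp: inj_on_def ent_def split: if_splits)

lemma ent_img: "3 \<le> H \<Longrightarrow> H \<le> 2*n+4 \<Longrightarrow> ent H ` {..<2*n+2} = {2..2*n+4} - {H}"
proof (intro equalityI subsetI)
  fix x assume "3 \<le> H" "H \<le> 2*n+4" "x \<in> ent H ` {..<2*n+2}"
  then show "x \<in> {2..2*n+4} - {H}" by (auto simp: ent_def)
next
  fix x assume a: "3 \<le> H" "H \<le> 2*n+4" "x \<in> {2..2*n+4} - {H}"
  show "x \<in> ent H ` {..<2*n+2}"
  proof (cases "x < H")
    case True
    then have "x = ent H (x-2)" using a by (auto simp: ent_def)
    then show ?thesis using a True by (intro image_eqI[of _ _ "x-2"]) auto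
  next
    case False
    then have "x = ent H (x-3)" using a by (auto simp: ent_def)
    then show ?thesis using a False by (intro image_eqI[of _ _ "x-3"]) auto
  qed
qed

definition letter :: "nat set \<Rightarrow> nat \<Rightarrow> nat \<Rightarrow> step" where
  "letter A H i = (if i+3 = H then (if ent H i \<in> A then S else W) else (if ent H i \<in> A then E else N))"

lemma xi_nth:
  assumes T: "T \<in> SYT n" and i: "i < 2*n+2"
  shows "xi n T ! i = letter (T`arm_cells n) (T heart_cell) i"
proof -
  note F = SYT_facts[OF T]
  define H where "H = T heart_cell"
  have H3: "3 \<le> H" using F H_def by auto
  have H4: "H \<le> 2*n+4" using F(2) H_def by auto
  have "i \<in> {..<2*n+2}" using i by simp
  then have "ent H i \<in> ent H ` {..<2*n+2}" by (rule imageI)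
  then have k: "ent H i \<in> {2..2*n+4} - {H}" unfolding ent_img[OF H3 H4] .
  define AT where "AT = T`arm_cells n"
  define LT where "LT = T`leg_cells n"
  have kk: "ent H i \<in> AT \<union> LT" "ent H i \<noteq> 1" using k F(2) H_def AT_def LT_def by auto
  have ia: "in_arm n T x = (x \<in> AT)" for x unfolding in_arm_def AT_def ..
  have il: "in_leg n T (ent H i) = (ent H i \<notin> AT)"
  proof -
    have "in_leg n T (ent H i) = (ent H i \<in> LT)" unfolding in_leg_def LT_def ..
    moreover have "AT \<inter> LT = {1}" using F(7) AT_def LT_def by simp
    ultimately show ?thesis using kk by blast
  qed
  have "xi n T ! i = xi_letter n T (Suc i)" using i by (simp add: xi_def)
  also have "\<dots> = letter AT H i"
  proof -
    consider (lt) "i+3 < H" | (eq) "i+3 = H" | (gt) "H < i+3" by linarith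
    then show ?thesis
    proof cases
      case lt
      then have e: "ent H i = Suc i + 1" by (simp add: ent_def)
      show ?thesis using lt il unfolding xi_letter_def Let_def H_def[symmetric] letter_def ia e
        by simp
    next
      case eq
      then have e: "ent H i = Suc i + 1" by (simp add: ent_def)
      show ?thesis using eq il unfolding xi_letter_def Let_def H_def[symmetric] letter_def ia e
        by simp
    next
      case gt
      then have e: "ent H i = Suc i + 2" by (simp add: ent_def)
      show ?thesis using gt il unfolding xi_letter_def Let_def H_def[symmetric] letter_def ia e
        by simp
    qed
  qed
  finally show ?thesis by (simp add: H_def AT_def)
qed

lemma xi_eq: "T \<in> SYT n \<Longrightarrow> xi n T = map (letter (T`arm_cells n) (T heart_cell)) [0..<2*n+2]"
proof (rule nth_equalityI)
  assume T: "T \<in> SYT n"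
  show "length (xi n T) = length (map (letter (T`arm_cells n) (T heart_cell)) [0..<2*n+2])"
    by (simp add: xi_def)
  fix i assume "i < length (xi n T)"
  then have i: "i < 2*n+2" by (simp add: xi_def)
  show "xi n T ! i = map (letter (T`arm_cells n) (T heart_cell)) [0..<2*n+2] ! i"
    using i by (simp add: xi_nth[OF T i] del: upt_Suc)
qed


definition good :: "nat \<Rightarrow> nat set \<Rightarrow> nat \<Rightarrow> bool" where
  "good n A H \<longleftrightarrow> 3 \<le> H \<and> H \<le> 2*n+4 \<and> A \<subseteq> {1..2*n+4} \<and> H \<notin> A \<and> 1 \<in> A \<and> card A = n+2
     \<and> (\<exists>a\<in>A. 2 \<le> a \<and> a < H) \<and> (\<exists>b. 2 \<le> b \<and> b < H \<and> b \<notin> A)"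

lemma good_SYT: assumes T: "T \<in> SYT n" shows "good n (T`arm_cells n) (T heart_cell)"
proof -
  note F = SYT_facts[OF T]
  have "T (1,0) \<notin> T`arm_cells n"
  proof
    assume "T(1,0) \<in> T`arm_cells n"
    with F(7) F(12) have "T(1,0) \<in> {1}" by blast
    with F(10) show False by simp
  qed
  moreover have "T`arm_cells n \<subseteq> {1..2*n+4}" using F(2) by blast
  moreover have "3 \<le> T heart_cell" "T heart_cell \<le> 2*n+4" using F(2) F(8) F(9) by auto
  moreover have "1 \<in> T`arm_cells n" using F(7) by blast
  ultimately show ?thesis unfolding good_def using F(3) F(5) F(8-13)
    by (intro conjI bexI[of _ "T(0,1)"] exI[of _ "T(1,0)"]) auto
qed

lemma count_ent:
  assumes g: "good n A H"
  shows "card {i \<in> {..<2*n+2}. ent H i \<in> A} = n+1"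
proof -
  have H3: "3 \<le> H" and H4: "H \<le> 2*n+4" and As: "A \<subseteq> {1..2*n+4}" and HA: "H \<notin> A"
    and A1: "1 \<in> A" and cA: "card A = n+2" using g by (auto simp: good_def)
  have ge2: "2 \<le> ent H i" for i by (simp add: ent_def)
  have "ent H ` {i \<in> {..<2*n+2}. ent H i \<in> A} = A - {1}"
  proof (intro equalityI subsetI)
    fix x assume "x \<in> ent H ` {i \<in> {..<2*n+2}. ent H i \<in> A}"
    then obtain i where "x = ent H i" "ent H i \<in> A" by blast
    then show "x \<in> A - {1}" using ge2[of i] by simp
  next
    fix x assume x: "x \<in> A - {1}"
    then have "x \<in> {2..2*n+4} - {H}" using As HA by auto
    then have "x \<in> ent H ` {..<2*n+2}" using ent_img[OF H3 H4] by simp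
    then obtain i where "i < 2*n+2" "x = ent H i" by blast
    then show "x \<in> ent H ` {i \<in> {..<2*n+2}. ent H i \<in> A}" using x by blast
  qed
  moreover have "card (A - {1}) = n+1" using cA A1 by (simp add: card_Diff_singleton)
  moreover have "inj_on (ent H) {i \<in> {..<2*n+2}. ent H i \<in> A}"
    using ent_inj[of H] by (rule inj_on_subset) simp
  ultimately show ?thesis by (metis card_image)
qed

lemma sum_ind: "finite I \<Longrightarrow> (\<Sum>i\<in>I. if P i then 1 else 0 :: int) = int (card {i\<in>I. P i})"
  by (simp add: sum.inter_filter[symmetric])

lemma word_path:
  assumes g: "good n A H"
  shows "map (letter A H) [0..<2*n+2] \<in> paths n"
proof -
  have H3: "3 \<le> H" and H4: "H \<le> 2*n+4" using g by (auto simp: good_def)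
  obtain a where a: "a \<in> A" "2 \<le> a" "a < H" using g by (auto simp: good_def)
  obtain b where b: "b \<notin> A" "2 \<le> b" "b < H" using g by (auto simp: good_def)
  define w where "w = map (letter A H) [0..<2*n+2]"
  define ia where "ia i = (if ent H i \<in> A then 1 else 0 :: int)" for i
  define ib where "ib i = (if ent H i \<in> A then 0 else 1 :: int)" for i
  define d where "d i = (if i = H-3 then 1 else 0 :: int)" for i
  have fx: "fst (step_vec (letter A H i)) = ia i - d i" for i
    using H3 by (auto simp: letter_def ia_def d_def)
  have fy: "snd (step_vec (letter A H i)) = ib i - d i" for i
    using H3 by (auto simp: letter_def ib_def d_def)
  have ep: "endpoint (take k w) = ((\<Sum>i<k. ia i) - (\<Sum>i<k. d i), (\<Sum>i<k. ib i) - (\<Sum>i<k. d i))"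
    if k: "k \<le> 2*n+2" for k
  proof -
    have tk: "take k w = map (letter A H) [0..<k]" using k by (simp add: w_def take_map take_upt del: upt_Suc)
    have e1: "sum_list (map (fst \<circ> step_vec) (take k w)) = (\<Sum>i<k. ia i - d i)"
      unfolding tk by (simp add: fx sum_set_upt_conv_sum_list_nat[symmetric] atLeast0LessThan comp_def)
    have e2: "sum_list (map (snd \<circ> step_vec) (take k w)) = (\<Sum>i<k. ib i - d i)"
      unfolding tk by (simp add: fy sum_set_upt_conv_sum_list_nat[symmetric] atLeast0LessThan comp_def)
    show ?thesis unfolding endpoint_def e1 e2 by (simp add: sum_subtractf)
  qed
  have sd: "(\<Sum>i<k. d i) = (if H-3 < k then 1 else 0)" for k
    by (simp add: d_def sum.delta)
  have ia0: "0 \<le> ia i" "0 \<le> ib i" for i by (auto simp: ia_def ib_def)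
  have enta: "ent H (a-2) = a" and entb: "ent H (b-2) = b" using a b by (auto simp: ent_def)
  have nonneg: "0 \<le> fst (endpoint (take k w)) \<and> 0 \<le> snd (endpoint (take k w))" if k: "k \<le> 2*n+2" for k
  proof (cases "H-3 < k")
    case True
    have "ia (a-2) \<le> (\<Sum>i<k. ia i)" using True a ia0 by (intro member_le_sum) auto
    moreover have "ib (b-2) \<le> (\<Sum>i<k. ib i)" using True b ia0 by (intro member_le_sum) auto
    ultimately show ?thesis using ep[OF k] sd[of k] True enta entb a b by (simp add: ia_def ib_def)
  next
    case False
    have "0 \<le> (\<Sum>i<k. ia i)" "0 \<le> (\<Sum>i<k. ib i)" using ia0 by (auto intro: sum_nonneg)
    then show ?thesis using ep[OF k] sd[of k] False by simp
  qed
  have ca: "(\<Sum>i<2*n+2. ia i) = int (n+1)"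
  proof -
    have "(\<Sum>i<2*n+2. ia i) = int (card {i\<in>{..<2*n+2}. ent H i \<in> A})"
      unfolding ia_def by (rule sum_ind) simp
    then show ?thesis using count_ent[OF g] by (simp del: sum.lessThan_Suc)
  qed
  have "(\<Sum>i<2*n+2. ib i) = (\<Sum>i<2*n+2. 1 - ia i)"
    by (rule sum.cong) (auto simp: ia_def ib_def)
  also have "\<dots> = int (2*n+2) - int (n+1)" using ca by (simp add: sum_subtractf del: sum.lessThan_Suc)
  finally have cb: "(\<Sum>i<2*n+2. ib i) = int (n+1)" by (simp del: sum.lessThan_Suc)
  have lw: "length w = 2*n+2" by (simp add: w_def del: upt_Suc)
  have "endpoint w = (int n, int n)"
    using ep[of "2*n+2"] ca cb sd[of "2*n+2"] H4 H3 lw by (simp del: sum.lessThan_Suc)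
  moreover note lw
  ultimately show ?thesis using nonneg unfolding paths_def w_def[symmetric] by auto
qed


definition Lof :: "nat \<Rightarrow> nat set \<Rightarrow> nat \<Rightarrow> nat set" where
  "Lof n A H = insert 1 ({1..2*n+4} - A - {H})"

definition rebuild :: "nat \<Rightarrow> nat set \<Rightarrow> nat set \<Rightarrow> nat \<Rightarrow> (nat \<times> nat \<Rightarrow> nat)" where
  "rebuild n A L H = (\<lambda>(r,c). if r = 0 \<and> c < n+2 then sorted_list_of_set A ! c
      else if c = 0 \<and> r < n+2 then sorted_list_of_set L ! r
      else if r = 1 \<and> c = 1 then H else 0)"

lemma shape_iff: "(r,c) \<in> theta_shape n \<longleftrightarrow> (r = 0 \<and> c < n+2) \<or> (c = 0 \<and> r < n+2) \<or> (r = 1 \<and> c = 1)"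
  by (auto simp: theta_shape_def)

lemma sorted_map_upt:
  assumes "\<And>c. Suc c < m \<Longrightarrow> f c < (f (Suc c) :: nat)"
  shows "sorted_list_of_set (f ` {..<m}) = map f [0..<m]"
proof -
  have s: "sorted_wrt (<) (map f [0..<m])"
    using assms by (subst sorted_wrt_iff_nth_Suc_transp) (auto simp: transp_def)
  have "set (map f [0..<m]) = f ` {..<m}" by auto
  then show ?thesis
    using s strict_sorted_list_of_set[of "f ` {..<m}"] strict_sorted_equal
    by (metis finite_imageI finite_lessThan set_sorted_list_of_set)
qed

lemma Lof_SYT:
  assumes T: "T \<in> SYT n"
  shows "Lof n (T`arm_cells n) (T heart_cell) = T`leg_cells n"
proof -
  note F = SYT_facts[OF T]
  have "1 \<in> T`leg_cells n" using F(7) by blast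
  then show ?thesis unfolding Lof_def using F(2) F(6) F(7) by blast
qed

lemma rep:
  assumes T: "T \<in> SYT n"
  shows "T = rebuild n (T`arm_cells n) (Lof n (T`arm_cells n) (T heart_cell)) (T heart_cell)"
proof -
  have row: "\<And>r c. (r, c) \<in> theta_shape n \<Longrightarrow> (r, Suc c) \<in> theta_shape n \<Longrightarrow> T (r, c) < T (r, Suc c)"
   and col: "\<And>r c. (r, c) \<in> theta_shape n \<Longrightarrow> (Suc r, c) \<in> theta_shape n \<Longrightarrow> T (r, c) < T (Suc r, c)"
   and z: "\<And>x. x \<notin> theta_shape n \<Longrightarrow> T x = 0"
    using T by (auto simp: SYT_def)
  have la: "sorted_list_of_set (T`arm_cells n) = map (\<lambda>c. T(0,c)) [0..<n+2]"
    unfolding arm_img image_image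
    by (rule sorted_map_upt) (rule row; simp add: shape_iff)
  have ll: "sorted_list_of_set (T`leg_cells n) = map (\<lambda>r. T(r,0)) [0..<n+2]"
    unfolding leg_img image_image
    by (rule sorted_map_upt) (rule col; simp add: shape_iff)
  show ?thesis
  proof
    fix x :: "nat \<times> nat"
    obtain r c where x: "x = (r,c)" by (cases x)
    show "T x = rebuild n (T`arm_cells n) (Lof n (T`arm_cells n) (T heart_cell)) (T heart_cell) x"
      unfolding Lof_SYT[OF T] rebuild_def x la ll
      using z[of "(r,c)"] by (auto simp: shape_iff heart_cell_def simp del: upt_Suc)
  qed
qed

lemma nth0_min:
  fixes l :: "nat list"
  assumes "sorted_wrt (<) l" "x \<in> set l" "\<forall>y\<in>set l. x \<le> y"
  shows "l ! 0 = x"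
proof -
  obtain q where q: "q < length l" "l ! q = x" using assms(2) by (auto simp: in_set_conv_nth)
  show ?thesis
  proof (cases q)
    case 0 then show ?thesis using q by simp
  next
    case (Suc q')
    then have "l!0 < l!q" using assms(1) q by (intro sorted_wrt_nth_less) auto
    moreover have "0 < length l" using q(1) by linarith
    then have "l!0 \<in> set l" by (rule nth_mem)
    ultimately show ?thesis using assms(3) q by force
  qed
qed

lemma nth1_le:
  fixes l :: "nat list"
  assumes "sorted_wrt (<) l" "x \<in> set l" "x \<noteq> l!0"
  shows "l ! 1 \<le> x"
proof -
  obtain q where q: "q < length l" "l ! q = x" using assms(2) by (auto simp: in_set_conv_nth)
  have "q \<noteq> 0"
  proof
    assume "q = 0" then show False using q assms(3) by simp
  qed
  show ?thesis
  proof (cases "q = 1")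
    case True then show ?thesis using q by simp
  next
    case False
    have "1 < q" using \<open>q \<noteq> 0\<close> False by simp
    then have "l!1 < l!q" using assms(1) q by (intro sorted_wrt_nth_less) auto
    then show ?thesis using q by simp
  qed
qed

lemma card_shape: "card (theta_shape n) = 2*n+4"
proof -
  have e: "theta_shape n = (\<lambda>c. (0,c)) ` {..<n+2} \<union> (\<lambda>r. (r,0)) ` {1..<n+2} \<union> {(1,1)}"
    by (auto simp: theta_shape_def)
  have c1: "card ((\<lambda>c. (0::nat,c)) ` {..<n+2}) = n+2" by (subst card_image) (auto simp: inj_on_def)
  have c2: "card ((\<lambda>r. (r,0::nat)) ` {1..<n+2}) = n+1" by (subst card_image) (auto simp: inj_on_def)
  have d1: "(\<lambda>c. (0::nat,c)) ` {..<n+2} \<inter> (\<lambda>r. (r,0::nat)) ` {1..<n+2} = {}" by auto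
  have d2: "((\<lambda>c. (0::nat,c)) ` {..<n+2} \<union> (\<lambda>r. (r,0::nat)) ` {1..<n+2}) \<inter> {(1,1)} = {}" by auto
  define X where "X = (\<lambda>c. (0::nat,c)) ` {..<n+2}"
  define Y where "Y = (\<lambda>r. (r,0::nat)) ` {1..<n+2}"
  have fX: "finite X" "finite Y" by (simp_all add: X_def Y_def)
  have "card (X \<union> Y \<union> {(1,1)}) = card (X \<union> Y) + card {(1::nat,1::nat)}"
    by (rule card_Un_disjoint) (use fX d2 in \<open>auto simp: X_def Y_def\<close>)
  moreover have "card (X \<union> Y) = card X + card Y"
    by (rule card_Un_disjoint) (use fX d1 in \<open>auto simp: X_def Y_def\<close>)
  ultimately have "card (X \<union> Y \<union> {(1,1)}) = 2*n+4" using c1 c2 by (simp add: X_def Y_def)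
  then show ?thesis unfolding e X_def Y_def .
qed

lemma rebuild_SYT:
  assumes g: "good n A H" and T: "T = rebuild n A (Lof n A H) H"
  shows "T \<in> SYT n" "T`arm_cells n = A" "T heart_cell = H"
proof -
  have H3: "3 \<le> H" and H4: "H \<le> 2*n+4" and As: "A \<subseteq> {1..2*n+4}" and HA: "H \<notin> A"
    and A1: "1 \<in> A" and cA: "card A = n+2" using g by (auto simp: good_def)
  obtain a where a: "a \<in> A" "2 \<le> a" "a < H" using g by (auto simp: good_def)
  obtain b where b: "b \<notin> A" "2 \<le> b" "b < H" using g by (auto simp: good_def)
  define L where "L = Lof n A H"
  define la where "la = sorted_list_of_set A"
  define ll where "ll = sorted_list_of_set L"
  have fA: "finite A" using As finite_subset by blast
  have fL: "finite L" by (simp add: L_def Lof_def)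
  have Ls: "L \<subseteq> {1..2*n+4}" using H4 by (auto simp: L_def Lof_def)
  have L1: "1 \<in> L" by (simp add: L_def Lof_def)
  have HL: "H \<notin> L" using H3 by (simp add: L_def Lof_def)
  have bL: "b \<in> L" using b H4 by (simp add: L_def Lof_def)
  have AL: "A \<union> L \<union> {H} = {1..2*n+4}" using As H3 H4 by (auto simp: L_def Lof_def)
  have cL: "card L = n+2"
  proof -
    have "insert H A \<subseteq> {1..2*n+4}" using As H3 H4 by auto
    moreover have "card (insert H A) = n+3" using HA fA cA by simp
    ultimately have "card ({1..2*n+4} - insert H A) = n+1"
      by (subst card_Diff_subset) (auto intro: finite_subset)
    moreover have "{1..2*n+4} - A - {H} = {1..2*n+4} - insert H A" by auto
    moreover have "1 \<notin> {1..2*n+4} - A - {H}" using A1 by auto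
    ultimately show ?thesis by (simp add: L_def Lof_def)
  qed
  have sa: "sorted_wrt (<) la" and sl: "sorted_wrt (<) ll"
    by (simp_all add: la_def ll_def strict_sorted_list_of_set)
  have seta: "set la = A" and setl: "set ll = L" using fA fL by (simp_all add: la_def ll_def)
  have lena: "length la = n+2" and lenl: "length ll = n+2" using cA cL by (simp_all add: la_def ll_def)
  have la0: "la!0 = 1" using sa A1 As seta by (intro nth0_min) auto
  have ll0: "ll!0 = 1" using sl L1 Ls setl by (intro nth0_min) auto
  have la1: "la!1 < H" using nth1_le[OF sa, of a] a seta la0 by simp
  have ll1: "ll!1 < H" using nth1_le[OF sl, of b] b bL setl ll0 by simp
  have Tv: "T (r,c) = (if r = 0 \<and> c < n+2 then la ! c else if c = 0 \<and> r < n+2 then ll ! r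
      else if r = 1 \<and> c = 1 then H else 0)" for r c
    by (simp add: T rebuild_def la_def ll_def L_def)
  have imA: "T`arm_cells n = A"
  proof -
    have "T`arm_cells n = (\<lambda>c. la!c) ` {..<n+2}" unfolding arm_img image_image by (simp add: Tv)
    also have "\<dots> = set la" using lena by (auto simp: in_set_conv_nth)
    finally show ?thesis using seta by simp
  qed
  then show "T`arm_cells n = A" .
  have imL: "T`leg_cells n = L"
  proof -
    have "T`leg_cells n = (\<lambda>r. ll!r) ` {..<n+2}" unfolding leg_img image_image
      by (rule image_cong) (auto simp: Tv la0 ll0)
    also have "\<dots> = set ll" using lenl by (auto simp: in_set_conv_nth)
    finally show ?thesis using setl by simp
  qed
  have heart: "T heart_cell = H" by (simp add: heart_cell_def Tv)
  then show "T heart_cell = H" .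
  have img: "T ` theta_shape n = {1..2*n+4}"
    using imA imL heart AL unfolding shape_eq image_Un by auto
  have inj: "inj_on T (theta_shape n)"
  proof (rule eq_card_imp_inj_on)
    show "finite (theta_shape n)" using card_shape[of n] card_gt_0_iff by fastforce
    show "card (T ` theta_shape n) = card (theta_shape n)" unfolding img card_shape by simp
  qed
  have zero: "\<forall>x. x \<notin> theta_shape n \<longrightarrow> T x = 0"
  proof (intro allI impI)
    fix x assume "x \<notin> theta_shape n"
    moreover obtain r c where "x = (r,c)" by (cases x)
    ultimately show "T x = 0" by (auto simp: Tv shape_iff)
  qed
  have rows: "\<forall>r c. (r, c) \<in> theta_shape n \<and> (r, Suc c) \<in> theta_shape n \<longrightarrow> T (r, c) < T (r, Suc c)"
  proof (intro allI impI)
    fix r c assume rc: "(r, c) \<in> theta_shape n \<and> (r, Suc c) \<in> theta_shape n"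
    then have "(r = 0 \<and> Suc c < n+2) \<or> (r = 1 \<and> c = 0)" by (auto simp: shape_iff)
    then show "T (r, c) < T (r, Suc c)"
    proof
      assume rc2: "r = 0 \<and> Suc c < n+2"
      have "la!c < la!(Suc c)" using lena rc2 by (intro sorted_wrt_nth_less[OF sa]) auto
      then show ?thesis using rc2 by (simp add: Tv)
    next
      assume "r = 1 \<and> c = 0"
      then show ?thesis using ll1 by (simp add: Tv)
    qed
  qed
  have cols: "\<forall>r c. (r, c) \<in> theta_shape n \<and> (Suc r, c) \<in> theta_shape n \<longrightarrow> T (r, c) < T (Suc r, c)"
  proof (intro allI impI)
    fix r c assume rc: "(r, c) \<in> theta_shape n \<and> (Suc r, c) \<in> theta_shape n"
    then have "(c = 0 \<and> Suc r < n+2) \<or> (r = 0 \<and> c = 1)" by (auto simp: shape_iff)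
    then show "T (r, c) < T (Suc r, c)"
    proof
      assume rc2: "c = 0 \<and> Suc r < n+2"
      have "ll!r < ll!(Suc r)" using lenl rc2 by (intro sorted_wrt_nth_less[OF sl]) auto
      then show ?thesis using rc2 la0 ll0 by (cases "r = 0") (auto simp: Tv)
    next
      assume "r = 0 \<and> c = 1"
      then show ?thesis using la1 by (simp add: Tv)
    qed
  qed
  show "T \<in> SYT n" unfolding SYT_def bij_betw_def using inj img zero rows cols by blast
qed


lemma word_inj:
  assumes g: "good n A H" and g': "good n A' H'"
    and eq: "map (letter A H) [0..<2*n+2] = map (letter A' H') [0..<2*n+2]"
  shows "A = A' \<and> H = H'"
proof -
  have H3: "3 \<le> H" and H4: "H \<le> 2*n+4" and As: "A \<subseteq> {1..2*n+4}" and HA: "H \<notin> A"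
    and A1: "1 \<in> A" using g by (auto simp: good_def)
  have H3': "3 \<le> H'" and H4': "H' \<le> 2*n+4" and As': "A' \<subseteq> {1..2*n+4}" and HA': "H' \<notin> A'"
    and A1': "1 \<in> A'" using g' by (auto simp: good_def)
  have eqi: "letter A H i = letter A' H' i" if "i < 2*n+2" for i
    using eq that by (simp add: map_eq_conv del: upt_Suc)
  have HH: "H = H'"
  proof (rule ccontr)
    assume ne: "H \<noteq> H'"
    have "letter A H (H-3) = letter A' H' (H-3)" using H3 H4 by (intro eqi) simp
    then show False using ne H3 H3' unfolding letter_def by (auto split: if_splits)
  qed
  have memb: "x \<in> A \<longleftrightarrow> x \<in> A'" for x
  proof (cases "x \<in> {2..2*n+4} - {H}")
    case True
    then have "x \<in> ent H ` {..<2*n+2}" using ent_img[OF H3 H4] by simp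
    then obtain i where i: "i < 2*n+2" "x = ent H i" by blast
    have "letter A H i = letter A' H i" using eqi[OF i(1)] HH by simp
    then show ?thesis using i unfolding letter_def by (auto split: if_splits)
  next
    case False
    then have "x = 1 \<or> x = H \<or> x \<notin> {1..2*n+4}" by auto
    then show ?thesis using As As' HA HA' A1 A1' HH by auto
  qed
  then show ?thesis using HH by blast
qed

lemma counts:
  "fst (endpoint xs) = int (length (filter (\<lambda>s. s = E) xs)) - int (length (filter (\<lambda>s. s = W) xs))
   \<and> snd (endpoint xs) = int (length (filter (\<lambda>s. s = N) xs)) - int (length (filter (\<lambda>s. s = S) xs))
   \<and> length xs = length (filter (\<lambda>s. s = E) xs) + length (filter (\<lambda>s. s = W) xs)
       + length (filter (\<lambda>s. s = N) xs) + length (filter (\<lambda>s. s = S) xs)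
   \<and> length (filter (\<lambda>s. s = S \<or> s = W) xs) = length (filter (\<lambda>s. s = S) xs) + length (filter (\<lambda>s. s = W) xs)
   \<and> length (filter (\<lambda>s. s = E \<or> s = S) xs) = length (filter (\<lambda>s. s = E) xs) + length (filter (\<lambda>s. s = S) xs)"
proof (induction xs)
  case Nil
  then show ?case by (simp add: endpoint_def)
next
  case (Cons a xs)
  then show ?case by (cases a) (auto simp: endpoint_def)
qed

lemma path_decomp:
  assumes p: "ps \<in> paths n"
  shows "\<exists>A H. good n A H \<and> ps = map (letter A H) [0..<2*n+2]"
proof -
  have len: "length ps = 2*n+2" and nn: "\<And>k. k \<le> length ps \<Longrightarrow> 0 \<le> fst (endpoint (take k ps)) \<and> 0 \<le> snd (endpoint (take k ps))"
    and ep: "endpoint ps = (int n, int n)" using p by (auto simp: paths_def)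
  define lE where "lE = length (filter (\<lambda>s. s = E) ps)"
  define lW where "lW = length (filter (\<lambda>s. s = W) ps)"
  define lN where "lN = length (filter (\<lambda>s. s = N) ps)"
  define lS where "lS = length (filter (\<lambda>s. s = S) ps)"
  have C1: "fst (endpoint ps) = int lE - int lW" and C2: "snd (endpoint ps) = int lN - int lS"
    and C3: "length ps = lE + lW + lN + lS"
    and C4: "length (filter (\<lambda>s. s = S \<or> s = W) ps) = lS + lW"
    and C5: "length (filter (\<lambda>s. s = E \<or> s = S) ps) = lE + lS"
    using counts[of ps] unfolding lE_def lW_def lN_def lS_def by blast+
  have e1: "int n = int lE - int lW" using C1 ep by simp
  have e2: "int n = int lN - int lS" using C2 ep by simp
  have cSW: "length (filter (\<lambda>s. s = S \<or> s = W) ps) = 1" using C3 C4 e1 e2 len by linarith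
  have cES: "length (filter (\<lambda>s. s = E \<or> s = S) ps) = n+1" using C3 C5 e1 e2 len by linarith
  have "card {i. i < length ps \<and> (ps!i = S \<or> ps!i = W)} = 1"
    using cSW by (simp add: length_filter_conv_card)
  then obtain j where jset: "{i. i < length ps \<and> (ps!i = S \<or> ps!i = W)} = {j}"
    by (rule card_1_singletonE)
  have jm: "(i < length ps \<and> (ps!i = S \<or> ps!i = W)) \<longleftrightarrow> i = j" for i
  proof -
    have "i \<in> {i. i < length ps \<and> (ps!i = S \<or> ps!i = W)} \<longleftrightarrow> i \<in> {j}" by (simp only: jset)
    then show ?thesis by simp
  qed
  have j: "j < 2*n+2" "ps!j = S \<or> ps!j = W" using jm[of j] len by simp_all
  have oth: "ps!i = E \<or> ps!i = N" if "i < 2*n+2" "i \<noteq> j" for i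
  proof -
    have "\<not> (ps!i = S \<or> ps!i = W)" using jm[of i] that len by simp
    then show ?thesis by (cases "ps!i") simp_all
  qed
  define H where "H = j+3"
  have H3: "3 \<le> H" and H4: "H \<le> 2*n+4" using j by (auto simp: H_def)
  define B where "B = {i. i < 2*n+2 \<and> (ps!i = E \<or> ps!i = S)}"
  define A where "A = insert 1 (ent H ` B)"
  have ge2: "2 \<le> ent H i" for i by (simp add: ent_def)
  have entv: "i \<le> j \<Longrightarrow> ent H i = i + 2" for i by (simp add: ent_def H_def)
  have memA: "ent H i \<in> A \<longleftrightarrow> ps!i = E \<or> ps!i = S" if i: "i < 2*n+2" for i
  proof
    assume "ent H i \<in> A"
    then have "ent H i \<in> ent H ` B" using ge2[of i] by (auto simp: A_def)
    then obtain i' where "i' \<in> B" "ent H i = ent H i'" by blast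
    then show "ps!i = E \<or> ps!i = S" using ent_inj[of H] by (auto simp: B_def inj_on_def)
  qed (use i in \<open>auto simp: A_def B_def\<close>)
  have imB: "ent H ` B \<subseteq> {2..2*n+4} - {H}" using ent_img[OF H3 H4] by (auto simp: B_def)
  have firstS: "\<exists>i<j. ps!i = N" if "ps!j = S"
  proof -
    define t where "t = take (Suc j) ps"
    have lt: "length t = Suc j" using j len by (simp add: t_def)
    have "0 \<le> snd (endpoint t)" using nn[of "Suc j"] j len by (simp add: t_def)
    moreover have "t ! j = S" using that by (simp add: t_def)
    then have "S \<in> set t" using nth_mem[of j t] lt by simp
    then have "S \<in> set (filter (\<lambda>s. s = S) t)" by simp
    then have "0 < length (filter (\<lambda>s. s = S) t)" by (rule length_pos_if_in_set)
    ultimately have "length (filter (\<lambda>s. s = N) t) \<noteq> 0"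
      using counts[of t] by linarith
    then have "filter (\<lambda>s. s = N) t \<noteq> []" by simp
    then have "\<not> (\<forall>x\<in>set t. x \<noteq> N)" unfolding filter_empty_conv[symmetric] .
    then have "N \<in> set t" by blast
    then obtain i where i: "i < length t" "t ! i = N" by (metis in_set_conv_nth)
    then have "i < Suc j" "ps ! i = N" using lt by (simp_all add: t_def)
    moreover have "i \<noteq> j" using that \<open>ps!i = N\<close> by auto
    ultimately show ?thesis by (intro exI[of _ i]) simp
  qed
  have firstW: "\<exists>i<j. ps!i = E" if "ps!j = W"
  proof -
    define t where "t = take (Suc j) ps"
    have lt: "length t = Suc j" using j len by (simp add: t_def)
    have "0 \<le> fst (endpoint t)" using nn[of "Suc j"] j len by (simp add: t_def)
    moreover have "t ! j = W" using that by (simp add: t_def)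
    then have "W \<in> set t" using nth_mem[of j t] lt by simp
    then have "W \<in> set (filter (\<lambda>s. s = W) t)" by simp
    then have "0 < length (filter (\<lambda>s. s = W) t)" by (rule length_pos_if_in_set)
    ultimately have "length (filter (\<lambda>s. s = E) t) \<noteq> 0"
      using counts[of t] by linarith
    then have "filter (\<lambda>s. s = E) t \<noteq> []" by simp
    then have "\<not> (\<forall>x\<in>set t. x \<noteq> E)" unfolding filter_empty_conv[symmetric] .
    then have "E \<in> set t" by blast
    then obtain i where i: "i < length t" "t ! i = E" by (metis in_set_conv_nth)
    then have "i < Suc j" "ps ! i = E" using lt by (simp_all add: t_def)
    moreover have "i \<noteq> j" using that \<open>ps!i = E\<close> by auto
    ultimately show ?thesis by (intro exI[of _ i]) simp
  qed
  have cB: "card B = n+1" using cES len by (simp add: B_def length_filter_conv_card)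
  have cA: "card A = n+2"
  proof -
    have "1 \<notin> ent H ` B"
    proof
      assume "1 \<in> ent H ` B"
      then obtain i where "1 = ent H i" by blast
      with ge2[of i] show False by simp
    qed
    moreover have "card (ent H ` B) = n+1" using cB ent_inj[of H] by (simp add: card_image inj_on_subset)
    moreover have "finite B" by (simp add: B_def)
    ultimately show ?thesis by (simp add: A_def)
  qed
  have ex_a: "\<exists>a\<in>A. 2 \<le> a \<and> a < H"
  proof (cases "ps!j = S")
    case True
    then have "ent H j \<in> A" using memA j by blast
    then show ?thesis using entv[of j] by (intro bexI[of _ "ent H j"]) (auto simp: H_def)
  next
    case False
    then obtain i where i: "i < j" "ps!i = E" using firstW j by blast
    then have "ent H i \<in> A" using memA j by simp
    then show ?thesis using entv[of i] i by (intro bexI[of _ "ent H i"]) (auto simp: H_def)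
  qed
  have ex_b: "\<exists>b. 2 \<le> b \<and> b < H \<and> b \<notin> A"
  proof (cases "ps!j = S")
    case True
    then obtain i where i: "i < j" "ps!i = N" using firstS j by blast
    then have "ent H i \<notin> A" using memA j by simp
    then show ?thesis using entv[of i] i by (intro exI[of _ "ent H i"]) (auto simp: H_def)
  next
    case False
    then have "ps!j = W" using j by blast
    then have "ent H j \<notin> A" using memA j by simp
    then show ?thesis using entv[of j] by (intro exI[of _ "ent H j"]) (auto simp: H_def)
  qed
  have g: "good n A H" unfolding good_def
    using H3 H4 imB cA ex_a ex_b by (auto simp: A_def)
  have w: "ps = map (letter A H) [0..<2*n+2]"
  proof (rule nth_equalityI)
    show "length ps = length (map (letter A H) [0..<2*n+2])" using len by simp
    fix i assume "i < length ps"
    then have i: "i < 2*n+2" using len by simp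
    have "map (letter A H) [0..<2*n+2] ! i = letter A H i" using i by (simp del: upt_Suc)
    also have "\<dots> = ps ! i"
    proof (cases "i = j")
      case True
      then show ?thesis using j memA[OF i] by (auto simp: letter_def H_def)
    next
      case False
      then show ?thesis using oth[OF i False] memA[OF i] by (auto simp: letter_def H_def)
    qed
    finally show "ps ! i = map (letter A H) [0..<2*n+2] ! i" by simp
  qed
  show ?thesis using g w by blast
qed

theorem mainTheorem2:
  fixes n :: nat
  shows "(\<forall>T \<in> SYT n. xi n T \<in> paths n) \<and> bij_betw (xi n) (SYT n) (paths n)"
proof -
  have P: "xi n T \<in> paths n" if T: "T \<in> SYT n" for T
    using xi_eq[OF T] word_path[OF good_SYT[OF T]] by simp
  have inj: "inj_on (xi n) (SYT n)"
  proof (rule inj_onI)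
    fix T1 T2 assume T1: "T1 \<in> SYT n" and T2: "T2 \<in> SYT n" and e: "xi n T1 = xi n T2"
    have "T1`arm_cells n = T2`arm_cells n \<and> T1 heart_cell = T2 heart_cell"
      using word_inj[OF good_SYT[OF T1] good_SYT[OF T2]] e xi_eq[OF T1] xi_eq[OF T2] by simp
    then show "T1 = T2" using rep[OF T1] rep[OF T2] by metis
  qed
  have surj: "paths n \<subseteq> xi n ` SYT n"
  proof
    fix ps assume "ps \<in> paths n"
    then obtain A H where g: "good n A H" and w: "ps = map (letter A H) [0..<2*n+2]"
      using path_decomp by blast
    define T where "T = rebuild n A (Lof n A H) H"
    note R = rebuild_SYT[OF g T_def]
    have "xi n T = ps" using xi_eq[OF R(1)] R(2,3) w by simp
    then show "ps \<in> xi n ` SYT n" using R(1) by blast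
  qed
  show ?thesis using P inj surj unfolding bij_betw_def by blast
qed

end
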